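(* Let $k\ge 3$ and let $w$ be a word over $\{a,b\}$. Suppose an occurrence of $v=b^{k-1}a$ and an occurrence of $u=ba^{k-1}$ in $w$ are consecutive and overlap (the occurrence of $v$ first; necessarily the last two letters of $v$ coincide with the first two letters of $u$, giving the factor $b^{k-1}a^{k-1}$). Let $F_v,F_u\subseteq\{0,\dots,k-1\}$ be the corresponding sets of forbidden local positions. Then $$F_v\subseteq\{(j-2)\bmod k\mid j\in F_u\}\cup\{0\}.$$
   Context: $\Sigma=\{a,b\}$. For $k\ge 3$, $S_k=\left(\Sigma^k\setminus\{ba^{k-1},b^{k-1}a\}\right)\cup\left(\Sigma^{k-1}\setminus\{a^{k-1},b^{k-1}\}\right)$, $u=ba^{k-1}$, $v=b^{k-1}a$. $\mathit{Pref}(S^* )$ denotes the set of all prefixes of words in $S^*$. For $w=w_1\cdots w_n$, $w[i..j]=w_i\cdots w_j$ (empty if $i>j$). A position $j$, $0\le j\le n-1$, is forbidden in $w$ if $w[j+1..n]\notin\mathit{Pref}(S_k^* )$. An occurrence of $p\in\{u,v\}$ in $w$ is an index $s$ with $w[s+1..s+k]=p$; local position $i\in\{0,\dots,k-1\}$ of the occurrence is the position $s+i$ of $w$, and it is forbidden in the occurrence if $s+i$ is forbidden in $w$. Two occurrences of words from $\{u,v\}$ starting at $s<t$ overlap if $t<s+k$; they are consecutive if either they overlap or they are the only occurrences of $u$ or $v$ lying inside the factor $w[s+1..t+k]$. *)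

theory Defs
  imports Main
begin

datatype letter = a | b

type_synonym word = "letter list"

definition u_word :: "nat \<Rightarrow> word" where
  "u_word k = b # replicate (k - 1) a"

definition v_word :: "nat \<Rightarrow> word" where
  "v_word k = replicate (k - 1) b @ [a]"

definition S :: "nat \<Rightarrow> word set" where
  "S k = ({x. length x = k} - {u_word k, v_word k})
       \<union> ({x. length x = k - 1} - {replicate (k - 1) a, replicate (k - 1) b})"

definition star :: "word set \<Rightarrow> word set" where
  "star L = {concat ws | ws. set ws \<subseteq> L}"

definition Pref :: "word set \<Rightarrow> word set" where
  "Pref L = {x. \<exists>z. x @ z \<in> L}"

text \<open>Position j (0 <= j <= n-1) is forbidden in w iff w[j+1..n] is not in Pref(S_k^*).\<close>
definition forbidden :: "nat \<Rightarrow> word \<Rightarrow> nat \<Rightarrow> bool" where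
  "forbidden k w j \<longleftrightarrow> j < length w \<and> drop j w \<notin> Pref (star (S k))"

definition occ :: "word \<Rightarrow> word \<Rightarrow> nat \<Rightarrow> bool" where
  "occ p w s \<longleftrightarrow> s + length p \<le> length w \<and> take (length p) (drop s w) = p"

definition occ_uv :: "nat \<Rightarrow> word \<Rightarrow> nat \<Rightarrow> bool" where
  "occ_uv k w s \<longleftrightarrow> occ (u_word k) w s \<or> occ (v_word k) w s"

definition overlap :: "nat \<Rightarrow> nat \<Rightarrow> nat \<Rightarrow> bool" where
  "overlap k s t \<longleftrightarrow> s < t \<and> t < s + k"

definition consecutive :: "nat \<Rightarrow> word \<Rightarrow> nat \<Rightarrow> nat \<Rightarrow> bool" where
  "consecutive k w s t \<longleftrightarrow> occ_uv k w s \<and> occ_uv k w t \<and> s < t \<and>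
     (overlap k s t \<or> (\<forall>r. occ_uv k w r \<and> s \<le> r \<and> r + k \<le> t + k \<longrightarrow> r = s \<or> r = t))"

definition forbidden_local :: "nat \<Rightarrow> word \<Rightarrow> nat \<Rightarrow> nat set" where
  "forbidden_local k w s = {i. i < k \<and> forbidden k w (s + i)}"

end

theory Submission
  imports Defs
begin

lemma len_u: "length (u_word k) = (if k = 0 then 1 else k)"
  by (simp add: u_word_def)

lemma len_v: "length (v_word k) = (if k = 0 then 1 else k)"
  by (simp add: v_word_def)

lemma occ_nth: "occ p w s \<Longrightarrow> q < length p \<Longrightarrow> w ! (s + q) = p ! q"
  unfolding occ_def by (metis add_leD1 le_add_diff_inverse nth_drop nth_take)

lemma u_nth: "k \<ge> 1 \<Longrightarrow> q < k \<Longrightarrow> u_word k ! q = (if q = 0 then b else a)"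
  by (cases q) (auto simp: u_word_def)

lemma v_nth: "k \<ge> 1 \<Longrightarrow> q < k \<Longrightarrow> v_word k ! q = (if q < k - 1 then b else a)"
  by (auto simp: v_word_def nth_append)

lemma pref_cons:
  assumes "x \<in> L" "y \<in> Pref (star L)" shows "x @ y \<in> Pref (star L)"
proof -
  from assms(2) obtain z ws where "y @ z = concat ws" "set ws \<subseteq> L"
    unfolding Pref_def star_def by blast
  then have "(x @ y) @ z = concat (x # ws)" "set (x # ws) \<subseteq> L" using assms(1) by auto
  then show ?thesis unfolding Pref_def star_def by blast
qed

lemma m2: "3 \<le> (k::nat) \<Longrightarrow> nat ((int 0 - 2) mod int k) = k - 2"
proof -
  assume "3 \<le> k"
  have "(-2::int) mod int k = (int k - 2) mod int k"
    by (metis add.commute diff_add_cancel mod_add_self2 diff_minus_eq_add)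
  also have "\<dots> = int k - 2" using \<open>3 \<le> k\<close> by (intro mod_pos_pos_trivial) auto
  finally show ?thesis using \<open>3 \<le> k\<close> by simp
qed

lemma m1: "3 \<le> (k::nat) \<Longrightarrow> nat ((int 1 - 2) mod int k) = k - 1"
  by (simp add: zmod_minus1)

lemma m0: "i < (k::nat) \<Longrightarrow> nat ((int (i+2) - 2) mod int k) = i"
  by simp

theorem lemma4:
  fixes k :: nat and w :: word and s t :: nat
  assumes "k \<ge> 3"
    and "occ (v_word k) w s"
    and "occ (u_word k) w t"
    and "consecutive k w s t"
    and "overlap k s t"
  shows "forbidden_local k w s \<subseteq>
           {nat ((int j - 2) mod int k) | j. j \<in> forbidden_local k w t} \<union> {0}"
proof -
  have k1: "k \<ge> 1" using assms(1) by simp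
  have lv: "length (v_word k) = k" and lu: "length (u_word k) = k" using k1 by (auto simp: len_u len_v)
  have wv: "\<And>q. q < k \<Longrightarrow> w ! (s + q) = (if q < k - 1 then b else a)"
    using occ_nth[OF assms(2)] v_nth[OF k1] lv by simp
  have wu: "\<And>q. q < k \<Longrightarrow> w ! (t + q) = (if q = 0 then b else a)"
    using occ_nth[OF assms(3)] u_nth[OF k1] lu by simp
  have lenw: "t + k \<le> length w" using assms(3) lu unfolding occ_def by simp
  have st: "s < t" "t < s + k" using assms(5) unfolding overlap_def by auto
  define d where "d = t - s"
  have td: "t = s + d" "d < k" using st d_def by auto
  have "d \<noteq> k - 1"
  proof
    assume "d = k - 1"
    then have "w ! t = a" using wv[of d] td by simp
    moreover have "w ! t = b" using wu[of 0] k1 by simp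
    ultimately show False by simp
  qed
  moreover have "\<not> d + 1 < k - 1"
  proof
    assume h: "d + 1 < k - 1"
    then have "w ! (t+1) = b" using wv[of "d+1"] td by simp
    moreover have "w ! (t + 1) = a" using wu[of 1] assms(1) by simp
    ultimately show False by simp
  qed
  ultimately have dk: "d = k - 2" using td by linarith
  show ?thesis
  proof
    fix i assume "i \<in> forbidden_local k w s"
    then have ik: "i < k" and fi: "forbidden k w (s + i)" unfolding forbidden_local_def by auto
    show "i \<in> {nat ((int j - 2) mod int k) | j. j \<in> forbidden_local k w t} \<union> {0}"
    proof (cases "i = 0")
      case True then show ?thesis by simp
    next
      case False
      show ?thesis
      proof (cases "i = k - 2")
        case True
        then have "0 \<in> forbidden_local k w t" using fi td dk k1
          unfolding forbidden_local_def by simp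
        moreover have "nat ((int 0 - 2) mod int k) = i"
          using True assms(1) m2 by simp
        ultimately show ?thesis by blast
      next
        case False2: False
        show ?thesis
        proof (cases "i = k - 1")
          case True
          then have "1 \<in> forbidden_local k w t" using fi td dk k1 assms(1)
            unfolding forbidden_local_def by simp
          moreover have "nat ((int 1 - 2) mod int k) = i"
            using True assms(1) m1 by simp
          ultimately show ?thesis by blast
        next
          case False3: False
          have ii: "1 \<le> i" "i + 3 \<le> k" using False False2 False3 ik by auto
          have "forbidden k w (s + i + k)"
          proof (rule ccontr)
            assume nf: "\<not> forbidden k w (s + i + k)"
            have "s + i + k < length w" using lenw td dk ii by linarith
            then have y: "drop (s + i + k) w \<in> Pref (star (S k))"
              using nf unfolding forbidden_def by simp
            define x where "x = take k (drop (s + i) w)"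
            have lx: "length x = k" using lenw td dk ii unfolding x_def by simp
            have xn: "\<And>p. p < k \<Longrightarrow> x ! p = w ! (s + i + p)"
              unfolding x_def using lenw td dk ii by (simp add: add.assoc)
            have "x ! 1 = b" using xn[of 1] wv[of "i+1"] ii by (simp add: add.assoc)
            moreover have "u_word k ! 1 = a" using u_nth[OF k1, of 1] assms(1) by simp
            ultimately have xu: "x \<noteq> u_word k" by auto
            have "x ! (k - 2) = a"
              using xn[of "k-2"] wu[of i] ii td dk by (simp add: add.assoc add.commute)
            moreover have "v_word k ! (k - 2) = b" using v_nth[OF k1, of "k-2"] assms(1) by simp
            ultimately have xv: "x \<noteq> v_word k" by auto
            have xS: "x \<in> S k" using lx xu xv unfolding S_def by simp
            have "drop (s + i) w = x @ drop (s + i + k) w"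
              unfolding x_def by (metis append_take_drop_id drop_drop add.commute)
            then have "drop (s + i) w \<in> Pref (star (S k))"
              using pref_cons[OF xS y] by simp
            then show False using fi unfolding forbidden_def by simp
          qed
          then have "i + 2 \<in> forbidden_local k w t" using ii td dk
            unfolding forbidden_local_def by (simp add: algebra_simps)
          moreover have "i = nat ((int (i+2) - 2) mod int k)" using ik m0 by simp
          ultimately have "\<exists>j. i = nat ((int j - 2) mod int k) \<and> j \<in> forbidden_local k w t"
            by blast
          then show ?thesis by simp
        qed
      qed
    qed
  qed
qed

end
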